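(* Let $n\ge 3$ and let $A$ be a real nonsingular tridiagonal $n\times n$ matrix with diagonal entries $A_{i,i}=b_i$, subdiagonal entries $A_{i+1,i}=a_i$ and superdiagonal entries $A_{i,i+1}=c_i$. Suppose $A$ is diagonally dominant by rows: $$|b_1|\ge |c_1|,\qquad |b_i|\ge |a_{i-1}|+|c_i|\ (i=2,\dots,n-1),\qquad |b_n|\ge |a_{n-1}|,$$ with strict inequality in at least one of these inequalities. Then for every integer $k$ with $1<k<n$, the solutions $\mathbf Z^L_k$ of $B^L_k\mathbf Z^L_k=\mathbf e^L$ and $\mathbf Z^R_k$ of $B^R_k\mathbf Z^R_k=\mathbf e^R$ satisfy $\max_m|(\mathbf Z^L_k)_m|\le 1$ and $\max_m|(\mathbf Z^R_k)_m|\le 1$.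
   Context: For $1\le k\le n$: $B^L_k$ is the $k\times k$ matrix whose rows $1,\dots,k-1$ are rows $1,\dots,k-1$ of $A$ restricted to columns $1,\dots,k$, and whose last row is $(0,\dots,0,1)$; $\mathbf e^L=(0,\dots,0,1)^{\mathrm T}\in\mathbb R^k$. $B^R_k$ is the $(n-k+1)\times(n-k+1)$ matrix with rows and columns indexed by $k,\dots,n$, whose row $k$ is $(1,0,\dots,0)$ and whose row $m$ ($m=k+1,\dots,n$) is row $m$ of $A$ restricted to columns $k,\dots,n$; $\mathbf e^R=(1,0,\dots,0)^{\mathrm T}\in\mathbb R^{n-k+1}$. The paper calls its dichotomy algorithm "stable" exactly when these bounds hold for the vectors it uses. *)

theory Defs
  imports "Jordan_Normal_Form.Determinant"
begin

text \<open>Matrices are 0-indexed: the paper's entry (i,j) (1-based) is A $$ (i-1, j-1).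
  The paper's index k (1-based, 1 < k < n) is kept 1-based.\<close>

definition tridiagonal :: "nat \<Rightarrow> real mat \<Rightarrow> bool" where
  "tridiagonal n A \<longleftrightarrow> (\<forall>i<n. \<forall>j<n. (j + 1 < i \<or> i + 1 < j) \<longrightarrow> A $$ (i, j) = 0)"

definition dd_lhs :: "real mat \<Rightarrow> nat \<Rightarrow> real" where
  "dd_lhs A i = \<bar>A $$ (i, i)\<bar>"

definition dd_rhs :: "nat \<Rightarrow> real mat \<Rightarrow> nat \<Rightarrow> real" where
  "dd_rhs n A i = (if 0 < i then \<bar>A $$ (i, i - 1)\<bar> else 0)
                 + (if i + 1 < n then \<bar>A $$ (i, i + 1)\<bar> else 0)"

definition row_diag_dominant :: "nat \<Rightarrow> real mat \<Rightarrow> bool" where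
  "row_diag_dominant n A \<longleftrightarrow>
     (\<forall>i<n. dd_lhs A i \<ge> dd_rhs n A i) \<and> (\<exists>i<n. dd_lhs A i > dd_rhs n A i)"

definition BL :: "real mat \<Rightarrow> nat \<Rightarrow> real mat" where
  "BL A k = mat k k (\<lambda>(i, j). if i + 1 < k then A $$ (i, j) else (if j + 1 = k then 1 else 0))"

definition eL :: "nat \<Rightarrow> real vec" where
  "eL k = unit_vec k (k - 1)"

text \<open>B^R_k ((n-k+1) x (n-k+1)), indices k..n: first row (1,0,...,0),
  row m = row m of A on columns k..n for m = k+1..n.\<close>
definition BR :: "nat \<Rightarrow> real mat \<Rightarrow> nat \<Rightarrow> real mat" where
  "BR n A k = mat (n - k + 1) (n - k + 1)
     (\<lambda>(i, j). if i = 0 then (if j = 0 then 1 else 0) else A $$ (k - 1 + i, k - 1 + j))"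

definition eR :: "nat \<Rightarrow> nat \<Rightarrow> real vec" where
  "eR n k = unit_vec (n - k + 1) 0"

end

theory Submission
  imports Defs
begin

lemma tri_sum:
  fixes g :: "nat \<Rightarrow> real"
  assumes "i < K" "\<And>j. j < K \<Longrightarrow> j + 1 < i \<or> i + 1 < j \<Longrightarrow> g j = 0"
  shows "(\<Sum>j<K. g j) = (if 0 < i then g (i-1) else 0) + g i + (if i+1 < K then g (i+1) else 0)"
proof -
  let ?T = "{j. j < K \<and> i \<le> j + 1 \<and> j \<le> i + 1}"
  have "(\<Sum>j<K. g j) = (\<Sum>j\<in>?T. g j)"
  proof (rule sum.mono_neutral_right)
    show "\<forall>j\<in>{..<K} - ?T. g j = 0"
    proof
      fix j assume "j \<in> {..<K} - ?T"
      hence "j < K" "j + 1 < i \<or> i + 1 < j" by auto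
      thus "g j = 0" by (rule assms(2))
    qed
  qed auto
  also have "?T = (if 0 < i then {i-1} else {}) \<union> {i} \<union> (if i+1 < K then {i+1} else {})"
    using assms(1) by (auto split: if_splits)
  also have "(\<Sum>j\<in>\<dots>. g j) = (if 0 < i then g (i-1) else 0) + g i + (if i+1 < K then g (i+1) else 0)"
    by (cases "0 < i"; cases "i+1 < K") auto
  finally show ?thesis .
qed

lemma det_block_ur:
  fixes A :: "real mat"
  assumes A: "A \<in> carrier_mat n n" and q: "q \<le> n"
  and z: "\<And>i j. i < q \<Longrightarrow> q \<le> j \<Longrightarrow> j < n \<Longrightarrow> A $$ (i,j) = 0"
  and x: "x \<in> carrier_vec q" "x \<noteq> 0\<^sub>v q" and ker: "mat q q (\<lambda>(i,j). A $$ (i,j)) *\<^sub>v x = 0\<^sub>v q"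
  shows "det A = 0"
proof -
  define A1 where "A1 = mat q q (\<lambda>(i,j). A $$ (i,j))"
  define A3 where "A3 = mat (n-q) q (\<lambda>(i,j). A $$ (i+q,j))"
  define A4 where "A4 = mat (n-q) (n-q) (\<lambda>(i,j). A $$ (i+q,j+q))"
  have "A = four_block_mat A1 (0\<^sub>m q (n-q)) A3 A4"
    by (rule eq_matI) (use A q z in \<open>auto simp: A1_def A3_def A4_def\<close>)
  hence "det A = det A1 * det A4"
    using det_four_block_mat_upper_right_zero[of A1 q "0\<^sub>m q (n-q)" "n-q" A3 A4]
    by (simp add: A1_def A3_def A4_def)
  moreover have "det A1 = 0"
    using det_0_iff_vec_prod_zero[of A1 q] x ker by (auto simp: A1_def)
  ultimately show ?thesis by simp
qed

lemma det_block_ll: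
  fixes A :: "real mat"
  assumes A: "A \<in> carrier_mat n n" and q: "q \<le> n"
  and z: "\<And>i j. q \<le> i \<Longrightarrow> i < n \<Longrightarrow> j < q \<Longrightarrow> A $$ (i,j) = 0"
  and x: "x \<in> carrier_vec (n-q)" "x \<noteq> 0\<^sub>v (n-q)"
  and ker: "mat (n-q) (n-q) (\<lambda>(i,j). A $$ (i+q,j+q)) *\<^sub>v x = 0\<^sub>v (n-q)"
  shows "det A = 0"
proof -
  define A1 where "A1 = mat q q (\<lambda>(i,j). A $$ (i,j))"
  define A2 where "A2 = mat q (n-q) (\<lambda>(i,j). A $$ (i,j+q))"
  define A4 where "A4 = mat (n-q) (n-q) (\<lambda>(i,j). A $$ (i+q,j+q))"
  have "A = four_block_mat A1 A2 (0\<^sub>m (n-q) q) A4"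
    by (rule eq_matI) (use A q z in \<open>auto simp: A1_def A2_def A4_def\<close>)
  hence "det A = det A1 * det A4"
    using det_four_block_mat_lower_left_zero[of A1 q A2 "n-q" "0\<^sub>m (n-q) q" A4]
    by (simp add: A1_def A2_def A4_def)
  moreover have "det A4 = 0"
    using det_0_iff_vec_prod_zero[of A4 "n-q"] x ker by (auto simp: A4_def)
  ultimately show ?thesis by simp
qed

lemma L_part:
  fixes A :: "real mat"
  assumes A: "A \<in> carrier_mat n n" and det: "det A \<noteq> 0" and tri: "tridiagonal n A"
    and dd: "\<forall>i<n. dd_lhs A i \<ge> dd_rhs n A i" and k: "1 < k" "k < n"
    and Zc: "Z \<in> carrier_vec k" and ZE: "BL A k *\<^sub>v Z = eL k" and m: "m < k"
  shows "\<bar>Z $ m\<bar> \<le> 1"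
proof (rule ccontr)
  assume big: "\<not> \<bar>Z $ m\<bar> \<le> 1"
  have rows: "(\<Sum>j<k. BL A k $$ (i,j) * Z $ j) = (if i = k - 1 then 1 else 0)" if "i < k" for i
  proof -
    have "(BL A k *\<^sub>v Z) $ i = eL k $ i" using ZE by simp
    thus ?thesis using that Zc k
      by (simp add: BL_def eL_def scalar_prod_def atLeast0LessThan)
  qed
  have last: "Z $ (k-1) = 1"
  proof -
    have "(\<Sum>j<k. BL A k $$ (k-1,j) * Z $ j) = (\<Sum>j<k. if j = k - 1 then Z $ j else 0)"
      by (rule sum.cong) (use k in \<open>auto simp: BL_def\<close>)
    also have "\<dots> = Z $ (k-1)" using k by simp
    finally show ?thesis using rows[of "k-1"] k by simp
  qed
  have band: "A $$ (i,j) = 0" if "i < n" "j < n" "j + 1 < i \<or> i + 1 < j" for i j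
    using tri that unfolding tridiagonal_def by blast
  have three: "(if 0 < i then A $$ (i,i-1) * Z $ (i-1) else 0) + A $$ (i,i) * Z $ i
      + A $$ (i,i+1) * Z $ (i+1) = 0" if "i < k - 1" for i
  proof -
    have "(\<Sum>j<k. BL A k $$ (i,j) * Z $ j) = (\<Sum>j<k. A $$ (i,j) * Z $ j)"
      by (rule sum.cong) (use that in \<open>auto simp: BL_def\<close>)
    also have "\<dots> = (if 0 < i then A $$ (i,i-1) * Z $ (i-1) else 0) + A $$ (i,i) * Z $ i
      + (if i+1 < k then A $$ (i,i+1) * Z $ (i+1) else 0)"
      by (rule tri_sum) (use that k band in auto)
    finally have "(if 0 < i then A $$ (i,i-1) * Z $ (i-1) else 0) + A $$ (i,i) * Z $ i
      + (if i+1 < k then A $$ (i,i+1) * Z $ (i+1) else 0) = 0" using rows[of i] that by simp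
    moreover have "i + 1 < k" using that by simp
    ultimately show ?thesis by simp
  qed
  define M where "M = Max ((\<lambda>j. \<bar>Z $ j\<bar>) ` {..<k})"
  have hM: "\<bar>Z $ j\<bar> \<le> M" if "j < k" for j unfolding M_def using that by simp
  have Mbig: "M > 1" using hM[OF m] big by simp
  obtain j0 where j0: "j0 < k" "\<bar>Z $ j0\<bar> = M"
  proof -
    have "M \<in> (\<lambda>j. \<bar>Z $ j\<bar>) ` {..<k}" unfolding M_def using k by (intro Max_in) auto
    thus ?thesis using that by auto
  qed
  define P where "P = {j. j < k \<and> \<bar>Z $ j\<bar> = M}"
  define p where "p = Max P"
  have finP: "finite P" unfolding P_def by simp
  have "p \<in> P" unfolding p_def using finP j0 by (intro Max_in) (auto simp: P_def)
  hence pk: "p < k" and Zp: "\<bar>Z $ p\<bar> = M" by (auto simp: P_def)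
  have pmax: "j \<le> p" if "j \<in> P" for j unfolding p_def using finP that by simp
  have pk1: "p < k - 1" using pk Zp Mbig last by (cases "p = k - 1") auto
  have Zp1: "\<bar>Z $ (p+1)\<bar> < M"
  proof -
    have "\<bar>Z $ (p+1)\<bar> \<le> M" using hM pk1 by simp
    moreover have "\<bar>Z $ (p+1)\<bar> \<noteq> M" using pmax[of "p+1"] pk1 by (auto simp: P_def less_diff_conv)
    ultimately show ?thesis by simp
  qed
  define a where "a = (if 0 < p then A $$ (p,p-1) else 0)"
  define za where "za = (if 0 < p then Z $ (p-1) else 0)"
  define b where "b = A $$ (p,p)"
  define c where "c = A $$ (p,p+1)"
  have eq: "a * za + b * Z $ p + c * Z $ (p+1) = 0"
    using three[OF pk1] by (auto simp: a_def za_def b_def c_def)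
  have pn: "p + 1 < n" "p < n" using pk1 k by auto
  have ddp: "\<bar>a\<bar> + \<bar>c\<bar> \<le> \<bar>b\<bar>"
    using dd[rule_format, OF pn(2)] pn unfolding dd_lhs_def dd_rhs_def a_def b_def c_def
    by (auto split: if_splits)
  have za: "\<bar>za\<bar> \<le> M" using hM pk Mbig by (auto simp: za_def)
  have c0: "c = 0"
  proof (rule ccontr)
    assume "c \<noteq> 0"
    hence cpos: "\<bar>c\<bar> > 0" by simp
    have h1: "\<bar>a * za\<bar> \<le> \<bar>a\<bar> * M" unfolding abs_mult by (rule mult_left_mono[OF za]) simp
    have "\<bar>b\<bar> * M = \<bar>b * Z $ p\<bar>" using Zp by (simp add: abs_mult)
    also have "b * Z $ p = - (a * za + c * Z $ (p+1))" using eq by simp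
    also have "\<bar>\<dots>\<bar> \<le> \<bar>a * za\<bar> + \<bar>c\<bar> * \<bar>Z $ (p+1)\<bar>"
      by (simp add: abs_mult[symmetric] abs_triangle_ineq del: abs_mult)
    finally have h2: "\<bar>b\<bar> * M \<le> \<bar>a\<bar> * M + \<bar>c\<bar> * \<bar>Z $ (p+1)\<bar>" using h1 by simp
    have h3: "(\<bar>a\<bar> + \<bar>c\<bar>) * M \<le> \<bar>b\<bar> * M" by (rule mult_right_mono[OF ddp]) (use Mbig in simp)
    have h4: "\<bar>c\<bar> * \<bar>Z $ (p+1)\<bar> < \<bar>c\<bar> * M" by (rule mult_strict_left_mono[OF Zp1 cpos])
    show False using h2 h3 h4 by (simp add: algebra_simps)
  qed
  define x where "x = vec (p+1) (\<lambda>j. Z $ j)"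
  have "det A = 0"
  proof (rule det_block_ur[OF A, of "p+1" x])
    show "p + 1 \<le> n" using pk k by simp
    show "A $$ (i, j) = 0" if "i < p + 1" "p + 1 \<le> j" "j < n" for i j
    proof (cases "i = p \<and> j = p + 1")
      case True thus ?thesis using c0 c_def by simp
    next
      case False thus ?thesis using that pk k by (intro band) auto
    qed
    show "x \<in> carrier_vec (p + 1)" by (simp add: x_def)
    show "x \<noteq> 0\<^sub>v (p + 1)"
    proof
      assume "x = 0\<^sub>v (p + 1)"
      hence "x $ p = 0" by simp
      thus False using Zp Mbig by (simp add: x_def)
    qed
    show "mat (p + 1) (p + 1) (\<lambda>(i, j). A $$ (i, j)) *\<^sub>v x = 0\<^sub>v (p + 1)"
    proof (rule eq_vecI)
      fix i assume i: "i < dim_vec (0\<^sub>v (p + 1) :: real vec)"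
      hence i': "i < p + 1" by simp
      have "(mat (p + 1) (p + 1) (\<lambda>(i, j). A $$ (i, j)) *\<^sub>v x) $ i = (\<Sum>j<p+1. A $$ (i,j) * Z $ j)"
        using i' by (simp add: x_def scalar_prod_def atLeast0LessThan)
      also have "\<dots> = (if 0 < i then A $$ (i,i-1) * Z $ (i-1) else 0) + A $$ (i,i) * Z $ i
        + (if i+1 < p+1 then A $$ (i,i+1) * Z $ (i+1) else 0)"
        by (rule tri_sum) (use i' pk k band in auto)
      also have "\<dots> = 0" using three[of i] i' pk1 c0 c_def by (cases "i = p") auto
      finally show "(mat (p + 1) (p + 1) (\<lambda>(i, j). A $$ (i, j)) *\<^sub>v x) $ i = 0\<^sub>v (p + 1) $ i"
        using i' by simp
    qed simp
  qed
  thus False using det by simp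
qed

lemma R_part:
  fixes A :: "real mat"
  assumes A: "A \<in> carrier_mat n n" and det: "det A \<noteq> 0" and tri: "tridiagonal n A"
    and dd: "\<forall>i<n. dd_lhs A i \<ge> dd_rhs n A i" and k: "1 < k" "k < n"
    and Zc: "Z \<in> carrier_vec (n - k + 1)" and ZE: "BR n A k *\<^sub>v Z = eR n k" and m: "m < n - k + 1"
  shows "\<bar>Z $ m\<bar> \<le> 1"
proof (rule ccontr)
  assume big: "\<not> \<bar>Z $ m\<bar> \<le> 1"
  obtain k' where kk: "k = Suc k'" using k by (cases k) auto
  define N where "N = n - k + 1"
  have N: "N = n - k'" "k' + N = n" using kk k by (auto simp: N_def)
  have band: "A $$ (i,j) = 0" if "i < n" "j < n" "j + 1 < i \<or> i + 1 < j" for i j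
    using tri that unfolding tridiagonal_def by blast
  have rows: "(\<Sum>j<N. BR n A k $$ (i,j) * Z $ j) = (if i = 0 then 1 else 0)" if "i < N" for i
  proof -
    have "(BR n A k *\<^sub>v Z) $ i = eR n k $ i" using ZE by simp
    thus ?thesis using that Zc k
      by (simp add: BR_def eR_def scalar_prod_def atLeast0LessThan N_def)
  qed
  have first: "Z $ 0 = 1"
  proof -
    have "(\<Sum>j<N. BR n A k $$ (0,j) * Z $ j) = (\<Sum>j<N. if j = 0 then Z $ j else 0)"
      by (rule sum.cong) (use k in \<open>auto simp: BR_def N_def\<close>)
    also have "\<dots> = Z $ 0" using k by (simp add: N_def)
    finally show ?thesis using rows[of 0] k by (simp add: N_def)
  qed
  have three: "A $$ (k'+i, k'+(i-1)) * Z $ (i-1) + A $$ (k'+i,k'+i) * Z $ i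
      + (if i+1 < N then A $$ (k'+i,k'+(i+1)) * Z $ (i+1) else 0) = 0" if "0 < i" "i < N" for i
  proof -
    have "(\<Sum>j<N. BR n A k $$ (i,j) * Z $ j) = (\<Sum>j<N. A $$ (k'+i,k'+j) * Z $ j)"
      by (rule sum.cong) (use that in \<open>auto simp: BR_def kk N_def\<close>)
    also have "\<dots> = (if 0 < i then A $$ (k'+i,k'+(i-1)) * Z $ (i-1) else 0) + A $$ (k'+i,k'+i) * Z $ i
      + (if i+1 < N then A $$ (k'+i,k'+(i+1)) * Z $ (i+1) else 0)"
      by (rule tri_sum) (use that N band in auto)
    finally show ?thesis using rows[of i] that by simp
  qed
  define M where "M = Max ((\<lambda>j. \<bar>Z $ j\<bar>) ` {..<N})"
  have hM: "\<bar>Z $ j\<bar> \<le> M" if "j < N" for j unfolding M_def using that by simp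
  have Mbig: "M > 1" using hM[of m] m big by (simp add: N_def)
  obtain j0 where j0: "j0 < N" "\<bar>Z $ j0\<bar> = M"
  proof -
    have "M \<in> (\<lambda>j. \<bar>Z $ j\<bar>) ` {..<N}" unfolding M_def using k by (intro Max_in) (auto simp: N_def)
    thus ?thesis using that by auto
  qed
  define P where "P = {j. j < N \<and> \<bar>Z $ j\<bar> = M}"
  define p where "p = Min P"
  have finP: "finite P" unfolding P_def by simp
  have "p \<in> P" unfolding p_def using finP j0 by (intro Min_in) (auto simp: P_def)
  hence pN: "p < N" and Zp: "\<bar>Z $ p\<bar> = M" by (auto simp: P_def)
  have pmin: "p \<le> j" if "j \<in> P" for j unfolding p_def using finP that by simp
  have p0: "0 < p" using Zp Mbig first by (cases "p = 0") auto
  have Zp1: "\<bar>Z $ (p-1)\<bar> < M"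
  proof -
    have "\<bar>Z $ (p-1)\<bar> \<le> M" using hM pN by simp
    moreover have "\<bar>Z $ (p-1)\<bar> \<noteq> M" using pmin[of "p-1"] pN p0 by (force simp: P_def)
    ultimately show ?thesis by simp
  qed
  define g where "g = k' + p"
  define a where "a = A $$ (g, g-1)"
  define b where "b = A $$ (g,g)"
  define c where "c = (if g + 1 < n then A $$ (g,g+1) else 0)"
  define zc where "zc = (if p + 1 < N then Z $ (p+1) else 0)"
  have gp: "g - 1 = k' + (p - 1)" "g + 1 = k' + (p+1)" using p0 by (auto simp: g_def)
  have gN: "(g + 1 < n) = (p + 1 < N)" using N by (auto simp: g_def)
  have eq: "a * Z $ (p-1) + b * Z $ p + c * zc = 0"
    using three[OF p0 pN] gN gp by (auto simp: a_def b_def c_def zc_def g_def)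
  have gn: "g < n" "0 < g" using pN N p0 by (auto simp: g_def)
  have ddp: "\<bar>a\<bar> + \<bar>c\<bar> \<le> \<bar>b\<bar>"
    using dd[rule_format, OF gn(1)] gn unfolding dd_lhs_def dd_rhs_def a_def b_def c_def
    by (auto split: if_splits)
  have zc: "\<bar>zc\<bar> \<le> M" using hM Mbig by (auto simp: zc_def)
  have a0: "a = 0"
  proof (rule ccontr)
    assume "a \<noteq> 0"
    hence apos: "\<bar>a\<bar> > 0" by simp
    have h1: "\<bar>c * zc\<bar> \<le> \<bar>c\<bar> * M" unfolding abs_mult by (rule mult_left_mono[OF zc]) simp
    have "\<bar>b\<bar> * M = \<bar>b * Z $ p\<bar>" using Zp by (simp add: abs_mult)
    also have "b * Z $ p = - (a * Z $ (p-1) + c * zc)" using eq by simp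
    also have "\<bar>\<dots>\<bar> \<le> \<bar>a\<bar> * \<bar>Z $ (p-1)\<bar> + \<bar>c * zc\<bar>"
      by (simp add: abs_mult[symmetric] abs_triangle_ineq del: abs_mult)
    finally have h2: "\<bar>b\<bar> * M \<le> \<bar>a\<bar> * \<bar>Z $ (p-1)\<bar> + \<bar>c\<bar> * M" using h1 by simp
    have h3: "(\<bar>a\<bar> + \<bar>c\<bar>) * M \<le> \<bar>b\<bar> * M" by (rule mult_right_mono[OF ddp]) (use Mbig in simp)
    have h4: "\<bar>a\<bar> * \<bar>Z $ (p-1)\<bar> < \<bar>a\<bar> * M" by (rule mult_strict_left_mono[OF Zp1 apos])
    show False using h2 h3 h4 by (simp add: algebra_simps)
  qed
  define x where "x = vec (n-g) (\<lambda>j. Z $ (p+j))"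
  have "det A = 0"
  proof (rule det_block_ll[OF A, of g x])
    show "g \<le> n" using gn by simp
    show "A $$ (i, j) = 0" if "g \<le> i" "i < n" "j < g" for i j
    proof (cases "i = g \<and> j = g - 1")
      case True thus ?thesis using a0 a_def by simp
    next
      case False thus ?thesis using that by (intro band) auto
    qed
    show "x \<in> carrier_vec (n - g)" by (simp add: x_def)
    show "x \<noteq> 0\<^sub>v (n - g)"
    proof
      assume "x = 0\<^sub>v (n - g)"
      hence "x $ 0 = 0" using gn by simp
      thus False using Zp Mbig gn by (simp add: x_def)
    qed
    show "mat (n - g) (n - g) (\<lambda>(i, j). A $$ (i + g, j + g)) *\<^sub>v x = 0\<^sub>v (n - g)"
    proof (rule eq_vecI)
      fix i assume i: "i < dim_vec (0\<^sub>v (n - g) :: real vec)"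
      hence i': "i < n - g" by simp
      have pi: "0 < p + i" "p + i < N" using i' p0 N by (auto simp: g_def)
      have "(mat (n - g) (n - g) (\<lambda>(i, j). A $$ (i + g, j + g)) *\<^sub>v x) $ i
          = (\<Sum>j<n-g. A $$ (i+g,j+g) * Z $ (p+j))"
        using i' by (simp add: x_def scalar_prod_def atLeast0LessThan)
      also have "\<dots> = (if 0 < i then A $$ (i+g,(i-1)+g) * Z $ (p+(i-1)) else 0) + A $$ (i+g,i+g) * Z $ (p+i)
        + (if i+1 < n-g then A $$ (i+g,(i+1)+g) * Z $ (p+(i+1)) else 0)"
        by (rule tri_sum) (use i' gn band in auto)
      also have "\<dots> = 0"
      proof -
        have t: "A $$ (k'+(p+i), k'+(p+i-1)) * Z $ (p+i-1) + A $$ (k'+(p+i),k'+(p+i)) * Z $ (p+i)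
          + (if p+i+1 < N then A $$ (k'+(p+i),k'+(p+i+1)) * Z $ (p+i+1) else 0) = 0"
          using three[OF pi] by simp
        have e1: "k'+(p+i) = i + g" by (simp add: g_def)
        have e2: "(i+1 < n-g) = (p+i+1 < N)" using N by (auto simp: g_def)
        show ?thesis
        proof (cases "i = 0")
          case True
          thus ?thesis using t[unfolded True] e2[unfolded True] a0 gp by (cases "p+1 < N") (simp_all add: a_def g_def)
        next
          case False
          hence "k'+(p+i-1) = (i-1)+g" "p+i-1 = p+(i-1)" by (auto simp: g_def)
          thus ?thesis using t e1 e2 False by (cases "p+i+1 < N") (simp_all add: g_def add_ac)
        qed
      qed
      finally show "(mat (n - g) (n - g) (\<lambda>(i, j). A $$ (i + g, j + g)) *\<^sub>v x) $ i = 0\<^sub>v (n - g) $ i"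
        using i' by simp
    qed simp
  qed
  thus False using det by simp
qed

theorem theorem4:
  fixes n :: nat and A :: "real mat"
  assumes "n \<ge> 3"
    and "A \<in> carrier_mat n n"
    and "det A \<noteq> 0"
    and "tridiagonal n A"
    and "row_diag_dominant n A"
  shows "\<forall>k. 1 < k \<and> k < n \<longrightarrow>
           (\<forall>ZL \<in> carrier_vec k. BL A k *\<^sub>v ZL = eL k \<longrightarrow> (\<forall>m<k. \<bar>ZL $ m\<bar> \<le> 1)) \<and>
           (\<forall>ZR \<in> carrier_vec (n - k + 1). BR n A k *\<^sub>v ZR = eR n k \<longrightarrow>
              (\<forall>m<n - k + 1. \<bar>ZR $ m\<bar> \<le> 1))"
proof -
  have dd: "\<forall>i<n. dd_lhs A i \<ge> dd_rhs n A i" using assms(5) unfolding row_diag_dominant_def by blast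
  show ?thesis
    using L_part[OF assms(2,3,4) dd] R_part[OF assms(2,3,4) dd] by blast
qed

end
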